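(* Let $X=(\mathbb{R}^n,S)$ and $A=(\mathbb{R}^m,T)$ be indecomposable topological Alexander quandles, where $S$ and $T$ are continuous additive automorphisms of $\mathbb{R}^n$ and $\mathbb{R}^m$. Then $H^1_{TC}(X,A)$ is (as a group under pointwise addition) equal to $\{\,x\mapsto F(x)+a \;:\; a\in\mathbb{R}^m,\ F:\mathbb{R}^n\to\mathbb{R}^m \text{ linear},\ FS=TF\,\}$.
   Context: A topological Alexander quandle $(A,T)$ is a topological abelian group $A$ with a continuous group automorphism $T$ and operation $a*b=Ta+(1-T)b$. A quandle is indecomposable if the group generated by the right multiplications $x\mapsto x*y$ acts transitively; for $(\mathbb{R}^n,S)$ this is equivalent to $I-S$ being invertible. For a topological quandle $X$ and topological Alexander quandle $(A,T)$, $H^1_{TC}(X,A)$ is the group (pointwise addition) of continuous quandle homomorphisms $\eta:X\to A$, i.e. continuous maps with $\eta(x*y)=T\eta(x)+(1-T)\eta(y)$ for all $x,y$. *)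

theory Defs
  imports "HOL-Analysis.Analysis"
begin

definition alex_op :: "('a::ab_group_add \<Rightarrow> 'a) \<Rightarrow> 'a \<Rightarrow> 'a \<Rightarrow> 'a" where
  "alex_op T a b = T a + (b - T b)"

definition top_alexander :: "('a::{topological_space, ab_group_add} \<Rightarrow> 'a) \<Rightarrow> bool" where
  "top_alexander T \<longleftrightarrow> continuous_on UNIV T \<and> bij T \<and> (\<forall>a b. T (a + b) = T a + T b)"

inductive_set inner_group :: "('a \<Rightarrow> 'a \<Rightarrow> 'a) \<Rightarrow> ('a \<Rightarrow> 'a) set"
  for op :: "'a \<Rightarrow> 'a \<Rightarrow> 'a" where
  id_in: "id \<in> inner_group op"
| right: "g \<in> inner_group op \<Longrightarrow> (\<lambda>x. op x y) \<circ> g \<in> inner_group op"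
| right_inv: "g \<in> inner_group op \<Longrightarrow> inv (\<lambda>x. op x y) \<circ> g \<in> inner_group op"

definition indecomposable :: "('a \<Rightarrow> 'a \<Rightarrow> 'a) \<Rightarrow> bool" where
  "indecomposable op \<longleftrightarrow> (\<forall>x y. \<exists>g \<in> inner_group op. g x = y)"

text \<open>First topological quandle cohomology: continuous quandle homomorphisms X -> A.\<close>
definition H1_TC :: "('a::topological_space \<Rightarrow> 'a \<Rightarrow> 'a) \<Rightarrow> ('b::{topological_space,ab_group_add} \<Rightarrow> 'b)
    \<Rightarrow> ('a \<Rightarrow> 'b) set" where
  "H1_TC op T = {\<eta>. continuous_on UNIV \<eta> \<and> (\<forall>x y. \<eta> (op x y) = alex_op T (\<eta> x) (\<eta> y))}"

end

theory Submission
  imports Defs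
begin

lemma additive_cont_linear:
  fixes f :: "'a::real_normed_vector \<Rightarrow> 'b::real_normed_vector"
  assumes add: "\<And>x y. f (x+y) = f x + f y" and cont: "continuous_on UNIV f"
  shows "linear f"
proof -
  have f0: "f 0 = 0" using add[of 0 0] by simp
  have fneg: "f (-x) = - f x" for x proof - have "f x + f (-x) = 0" using add[of x "-x"] f0 by simp then show ?thesis by (metis minus_unique) qed
  have fnat: "f (real n *\<^sub>R x) = real n *\<^sub>R f x" for n x
    by (induction n) (auto simp: f0 add scaleR_left_distrib add.commute)
  have fint: "f (real_of_int k *\<^sub>R x) = real_of_int k *\<^sub>R f x" for k x
  proof (cases "k \<ge> 0")
    case True then show ?thesis using fnat[of "nat k" x] by simp
  next
    case False
    then have e: "real_of_int k = - real (nat (-k))" by simp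
    have "f (real_of_int k *\<^sub>R x) = f (- (real (nat (-k)) *\<^sub>R x))" by (simp add: e)
    also have "\<dots> = - f (real (nat (-k)) *\<^sub>R x)" by (rule fneg)
    also have "\<dots> = real_of_int k *\<^sub>R f x" by (simp only: fnat e scaleR_minus_left)
    finally show ?thesis .
  qed
  have frat: "f (q *\<^sub>R x) = q *\<^sub>R f x" if qR: "q \<in> \<rat>" for q x
  proof -
    obtain b a where ab: "b > 0" "q = real_of_int a / real_of_int b"
      using Rats_cases'[OF qR] by metis
    have "real_of_int b *\<^sub>R f (q *\<^sub>R x) = f (real_of_int b *\<^sub>R (q *\<^sub>R x))" by (simp only: fint)
    also have "\<dots> = f (real_of_int a *\<^sub>R x)" using ab by simp
    also have "\<dots> = real_of_int a *\<^sub>R f x" by (simp add: fint)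
    finally have eq: "real_of_int b *\<^sub>R f (q *\<^sub>R x) = real_of_int a *\<^sub>R f x" .
    have "f (q *\<^sub>R x) = inverse (real_of_int b) *\<^sub>R (real_of_int b *\<^sub>R f (q *\<^sub>R x))"
      using ab(1) by simp
    also have "\<dots> = (inverse (real_of_int b) * real_of_int a) *\<^sub>R f x" by (simp only: eq scaleR_scaleR)
    finally show ?thesis using ab by (simp add: divide_inverse mult.commute)
  qed
  have fsc: "f (c *\<^sub>R x) = c *\<^sub>R f x" for c x
  proof -
    have cl: "closed {c. f (c *\<^sub>R x) = c *\<^sub>R f x}"
      apply (rule closed_Collect_eq)
       apply (rule continuous_on_compose2[OF cont]) apply (auto intro!: continuous_intros)
      done
    have "\<rat> \<subseteq> {c. f (c *\<^sub>R x) = c *\<^sub>R f x}" using frat by auto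
    then have "closure \<rat> \<subseteq> {c. f (c *\<^sub>R x) = c *\<^sub>R f x}" using cl closure_minimal by blast
    then show ?thesis using Rats_closure_real by auto
  qed
  show ?thesis by (rule linearI) (auto simp: add fsc)
qed


lemma inner_group_inv:
  fixes S :: "'a::real_vector \<Rightarrow> 'a"
  assumes lin: "linear S" and su: "surj S"
    and g: "g \<in> inner_group (alex_op S)"
  shows "g x - x \<in> range (\<lambda>y. y - S y)"
  using g
proof (induction arbitrary: x rule: inner_group.induct)
  case id_in
  show ?case by (rule image_eqI[of _ _ 0]) (auto simp: linear_0[OF lin])
next
  case (right g y)
  have sn: "S (- g x) = - S (g x)" using lin by (rule linear_neg)
  have "alex_op S (g x) y - g x = ((- g x) - S (- g x)) + (y - S y)"
    by (simp add: alex_op_def sn)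
  also have "\<dots> = (y - g x) - S (y - g x)"
    by (simp add: linear_diff[OF lin] sn algebra_simps)
  finally have a: "alex_op S (g x) y - g x = (y - g x) - S (y - g x)" .
  obtain u where u: "g x - x = u - S u" using right.IH[of x] by auto
  obtain v where v: "alex_op S (g x) y - g x = v - S v" using a by blast
  have "((\<lambda>x. alex_op S x y) \<circ> g) x - x = (u + v) - S (u + v)"
    using u v by (simp add: linear_add[OF lin] algebra_simps)
  then show ?case by auto
next
  case (right_inv g y)
  let ?R = "\<lambda>x. alex_op S x y"
  have sR: "surj ?R"
  proof -
    have "z \<in> range ?R" for z
    proof -
      obtain w where w: "S w = z - (y - S y)" using su by (metis surjD)
      have "?R w = z" using w by (simp add: alex_op_def)
      then show ?thesis by (metis rangeI)
    qed
    then show ?thesis by auto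
  qed
  define z where "z = g x"
  define w where "w = inv ?R z"
  have Rw: "?R w = z" unfolding w_def using sR by (metis surj_f_inv_f)
  have a: "w - z = (w - y) - S (w - y)"
    using Rw by (auto simp: alex_op_def linear_diff[OF lin] algebra_simps)
  obtain v where v: "w - z = v - S v" using a by blast
  obtain u where u: "g x - x = u - S u" using right_inv.IH[of x] by auto
  have "(inv ?R \<circ> g) x - x = (u + v) - S (u + v)"
    using u v unfolding w_def z_def by (simp add: linear_add[OF lin] algebra_simps)
  then show ?case by auto
qed

lemma indec_surj:
  fixes S :: "'a::real_vector \<Rightarrow> 'a"
  assumes lin: "linear S" and su: "surj S" and ind: "indecomposable (alex_op S)"
  shows "surj (\<lambda>y. y - S y)"
proof -
  have "z \<in> range (\<lambda>y. y - S y)" for z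
  proof -
    obtain g where g: "g \<in> inner_group (alex_op S)" "g 0 = z"
      using ind unfolding indecomposable_def by blast
    show ?thesis using inner_group_inv[OF lin su g(1), of 0] g(2) by simp
  qed
  then show ?thesis by auto
qed

lemma top_alex_linear:
  fixes S :: "'a::real_normed_vector \<Rightarrow> 'a"
  assumes "top_alexander S"
  shows "linear S" "surj S"
  using assms additive_cont_linear unfolding top_alexander_def bij_def by auto

theorem mainTheorem2:
  fixes S :: "real ^ 'n \<Rightarrow> real ^ 'n" and T :: "real ^ 'm \<Rightarrow> real ^ 'm"
  assumes "top_alexander S" and "top_alexander T"
    and "indecomposable (alex_op S)" and "indecomposable (alex_op T)"
  shows "H1_TC (alex_op S) T =
    {(\<lambda>x. F x + a) | F a. linear F \<and> F \<circ> S = T \<circ> F}"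
proof
  note linS = top_alex_linear(1)[OF assms(1)] and suS = top_alex_linear(2)[OF assms(1)]
  note linT = top_alex_linear(1)[OF assms(2)]
  have suD: "surj (\<lambda>y. y - S y)" by (rule indec_surj[OF linS suS assms(3)])
  show "H1_TC (alex_op S) T \<subseteq> {(\<lambda>x. F x + a) | F a. linear F \<and> F \<circ> S = T \<circ> F}"
  proof
    fix \<eta> assume "\<eta> \<in> H1_TC (alex_op S) T"
    then have ct: "continuous_on UNIV \<eta>"
      and hom: "\<And>x y. \<eta> (alex_op S x y) = alex_op T (\<eta> x) (\<eta> y)"
      unfolding H1_TC_def by auto
    define c where "c = \<eta> 0"
    define \<psi> where "\<psi> x = \<eta> x - c" for x
    have hp: "\<psi> (S x + (y - S y)) = T (\<psi> x) + (\<psi> y - T (\<psi> y))" for x y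
      using hom[of x y] unfolding \<psi>_def alex_op_def
      by (simp add: linear_diff[OF linT] algebra_simps)
    have p0: "\<psi> 0 = 0" by (simp add: \<psi>_def c_def)
    have pS: "\<psi> (S x) = T (\<psi> x)" for x
      using hp[of x 0] p0 by (simp add: linear_0[OF linS] linear_0[OF linT])
    have pD: "\<psi> (y - S y) = \<psi> y - T (\<psi> y)" for y
      using hp[of 0 y] p0 by (simp add: linear_0[OF linS] linear_0[OF linT])
    have padd: "\<psi> (u + v) = \<psi> u + \<psi> v" for u v
    proof -
      obtain x where x: "u = S x" using suS by (metis surjD)
      obtain y where y: "v = y - S y" using suD by (metis surjD)
      show ?thesis using hp[of x y] pS[of x] pD[of y] x y by simp
    qed
    have pc: "continuous_on UNIV \<psi>" unfolding \<psi>_def by (intro continuous_intros ct)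
    have lp: "linear \<psi>" by (rule additive_cont_linear[OF padd pc])
    have "\<psi> \<circ> S = T \<circ> \<psi>" using pS by auto
    moreover have "\<eta> = (\<lambda>x. \<psi> x + c)" by (simp add: \<psi>_def)
    ultimately show "\<eta> \<in> {(\<lambda>x. F x + a) | F a. linear F \<and> F \<circ> S = T \<circ> F}"
      using lp by blast
  qed
  show "{(\<lambda>x. F x + a) | F a. linear F \<and> F \<circ> S = T \<circ> F} \<subseteq> H1_TC (alex_op S) T"
  proof
    fix \<eta> assume "\<eta> \<in> {(\<lambda>x. F x + a) | F a. linear F \<and> F \<circ> S = T \<circ> F}"
    then obtain F a where e: "\<eta> = (\<lambda>x. F x + a)" and lF: "linear F" and c: "F \<circ> S = T \<circ> F"
      by blast
    have cF: "\<And>x. F (S x) = T (F x)" using c by (metis comp_apply)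
    have "continuous_on UNIV F"
      using lF by (simp add: linear_continuous_on linear_conv_bounded_linear)
    then have ct: "continuous_on UNIV \<eta>" unfolding e by (intro continuous_intros)
    have "\<eta> (alex_op S x y) = alex_op T (\<eta> x) (\<eta> y)" for x y
      unfolding e alex_op_def
      by (simp add: linear_add[OF lF] linear_diff[OF lF] linear_add[OF linT] linear_diff[OF linT] cF algebra_simps)
    then show "\<eta> \<in> H1_TC (alex_op S) T" unfolding H1_TC_def using ct by auto
  qed
qed

end
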